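(* Let $\lambda\in ba(\mathcal A)$ and let $\mathscr M\subset ba(\mathcal A)_+$ be convex and weak$^*$ compact. Then $\lambda\perp\mu$ for every $\mu\in\mathscr M$ if and only if $\lambda\perp_u\mathscr M$, i.e. for every $\varepsilon>0$ there is $A\in\mathcal A$ with $\sup_{\mu\in\mathscr M}|\mu|(A)+|\lambda|(A^c)<\varepsilon$.
   Context: $\mathcal A$ is an algebra of subsets of a set $\Omega$, $ba(\mathcal A)$ the space of bounded finitely additive real set functions on $\mathcal A$, $ba(\mathcal A)_+$ its nonnegative elements, $|\mu|$ total variation. $\mu\perp\lambda$ means: for every $\varepsilon>0$ there is $A\in\mathcal A$ with $|\mu|(A)+|\lambda|(A^c)<\varepsilon$. The weak$^*$ topology on $ba(\mathcal A)$ is that of pointwise convergence on $\mathcal A$-simple functions, $\mu\mapsto\mu(f)=\int f\,d\mu$ (i.e. $ba(\mathcal A)$ viewed as the dual of the space of uniform limits of simple functions). *)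

theory Defs
  imports "HOL-Analysis.Analysis"
begin

text \<open>Set functions are modelled as functions of type 'a set => real; elements of ba(A)
  are required to vanish outside the algebra A (a normalisation of their domain).\<close>

definition ba :: "'a set \<Rightarrow> 'a set set \<Rightarrow> ('a set \<Rightarrow> real) set" where
  "ba \<Omega> \<A> = {\<mu>. (\<forall>A\<in>\<A>. \<forall>B\<in>\<A>. A \<inter> B = {} \<longrightarrow> \<mu> (A \<union> B) = \<mu> A + \<mu> B)
                 \<and> (\<exists>K. \<forall>A\<in>\<A>. \<bar>\<mu> A\<bar> \<le> K)
                 \<and> (\<forall>A. A \<notin> \<A> \<longrightarrow> \<mu> A = 0)}"

definition ba_pos :: "'a set \<Rightarrow> 'a set set \<Rightarrow> ('a set \<Rightarrow> real) set" where
  "ba_pos \<Omega> \<A> = {\<mu> \<in> ba \<Omega> \<A>. \<forall>A\<in>\<A>. 0 \<le> \<mu> A}"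

definition tv :: "'a set set \<Rightarrow> ('a set \<Rightarrow> real) \<Rightarrow> 'a set \<Rightarrow> real" where
  "tv \<A> \<mu> A = Sup {(\<Sum>B\<in>P. \<bar>\<mu> B\<bar>) | P. finite P \<and> P \<subseteq> \<A> \<and> disjoint P \<and> \<Union>P = A}"

definition singular :: "'a set \<Rightarrow> 'a set set \<Rightarrow> ('a set \<Rightarrow> real) \<Rightarrow> ('a set \<Rightarrow> real) \<Rightarrow> bool" where
  "singular \<Omega> \<A> \<mu> la \<longleftrightarrow> (\<forall>\<epsilon>>0. \<exists>A\<in>\<A>. tv \<A> \<mu> A + tv \<A> la (\<Omega> - A) < \<epsilon>)"

text \<open>Uniform singularity: sup_{mu in M} |mu|(A) + |lambda|(A^c) < eps, with the supremum
  written out (it is < eps - |lambda|(A^c) iff some upper bound c is; empty M gives sup = -infinity).\<close>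
definition unif_singular :: "'a set \<Rightarrow> 'a set set \<Rightarrow> ('a set \<Rightarrow> real) \<Rightarrow> ('a set \<Rightarrow> real) set \<Rightarrow> bool" where
  "unif_singular \<Omega> \<A> la M \<longleftrightarrow>
     (\<forall>\<epsilon>>0. \<exists>A\<in>\<A>. \<exists>c. (\<forall>\<mu>\<in>M. tv \<A> \<mu> A \<le> c) \<and> c + tv \<A> la (\<Omega> - A) < \<epsilon>)"

definition simple_fn :: "'a set \<Rightarrow> 'a set set \<Rightarrow> ('a \<Rightarrow> real) \<Rightarrow> bool" where
  "simple_fn \<Omega> \<A> f \<longleftrightarrow> finite (f ` \<Omega>) \<and> (\<forall>y. {x\<in>\<Omega>. f x = y} \<in> \<A>)"

definition simple_int :: "'a set \<Rightarrow> ('a set \<Rightarrow> real) \<Rightarrow> ('a \<Rightarrow> real) \<Rightarrow> real" where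
  "simple_int \<Omega> \<mu> f = (\<Sum>y\<in>f ` \<Omega>. y * \<mu> {x\<in>\<Omega>. f x = y})"

definition wstar :: "'a set \<Rightarrow> 'a set set \<Rightarrow> ('a set \<Rightarrow> real) topology" where
  "wstar \<Omega> \<A> = topology_generated_by
     {{\<mu>. simple_int \<Omega> \<mu> f \<in> U} | f U. simple_fn \<Omega> \<A> f \<and> open U}"

definition convex_sf :: "('a set \<Rightarrow> real) set \<Rightarrow> bool" where
  "convex_sf M \<longleftrightarrow> (\<forall>\<mu>\<in>M. \<forall>\<nu>\<in>M. \<forall>t::real. 0 \<le> t \<and> t \<le> 1 \<longrightarrow>
       (\<lambda>A. t * \<mu> A + (1 - t) * \<nu> A) \<in> M)"

end

theory Submission
  imports Defs
begin

lemma two_minimax: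
  fixes X :: "'b topology" and K :: "'b set" and mix :: "real \<Rightarrow> 'b \<Rightarrow> 'b \<Rightarrow> 'b"
    and h g :: "'b \<Rightarrow> real"
  assumes cpt: "compactin X K"
    and mixK: "\<And>t y z. y\<in>K \<Longrightarrow> z\<in>K \<Longrightarrow> 0\<le>t \<Longrightarrow> t\<le>1 \<Longrightarrow> mix t y z \<in> K"
    and haff: "\<And>t y z. y\<in>K \<Longrightarrow> z\<in>K \<Longrightarrow> 0\<le>t \<Longrightarrow> t\<le>1 \<Longrightarrow> h (mix t y z) = t*h y + (1-t)*h z"
    and gaff: "\<And>t y z. y\<in>K \<Longrightarrow> z\<in>K \<Longrightarrow> 0\<le>t \<Longrightarrow> t\<le>1 \<Longrightarrow> g (mix t y z) = t*g y + (1-t)*g z"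
    and hc: "continuous_map (subtopology X K) euclideanreal h"
    and gc: "continuous_map (subtopology X K) euclideanreal g"
    and cov: "\<And>y. y\<in>K \<Longrightarrow> h y < 0 \<or> g y < 0"
    and ne: "K \<noteq> {}"
  shows "\<exists>r. 0\<le>r \<and> r\<le>1 \<and> (\<forall>y\<in>K. r*h y + (1-r)*g y < 0)"
proof -
  define S where "S = (\<lambda>y. (h y, g y)) ` K"
  have "compactin (subtopology X K) K" using cpt by (simp add: compactin_subtopology)
  moreover have "continuous_map (subtopology X K) euclidean (\<lambda>y. (h y, g y))"
    using continuous_map_pairedI[OF hc gc] by simp
  ultimately have "compactin euclidean S" unfolding S_def by (rule image_compactin)
  hence cS: "compact S" by simp
  have vS: "convex S" unfolding convex_def S_def
  proof (clarify)
    fix y z u v assume yz: "y\<in>K" "z\<in>K" and uv: "0\<le>(u::real)" "0\<le>v" "u+v=1"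
    have "u\<le>1" using uv by auto
    have "v = 1-u" using uv by auto
    show "u *\<^sub>R (h y, g y) + v *\<^sub>R (h z, g z) \<in> (\<lambda>y. (h y, g y)) ` K"
      apply (rule image_eqI[where x="mix u y z"])
      using yz uv \<open>u\<le>1\<close> \<open>v=1-u\<close> haff gaff mixK by auto
  qed
  define T where "T = {p::real\<times>real. 0 \<le> fst p \<and> 0 \<le> snd p}"
  have cT: "closed T" unfolding T_def
    by (intro closed_Collect_conj closed_Collect_le continuous_intros)
  have vT: "convex T" unfolding T_def convex_def by auto
  have dj: "S \<inter> T = {}" unfolding S_def T_def using cov by force
  have "S \<noteq> {}" using ne S_def by auto
  then obtain a b where ab: "\<forall>x\<in>S. inner a x < b" "\<forall>x\<in>T. inner a x > b"
    using separating_hyperplane_compact_closed[OF vS cS _ vT cT dj] by blast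
  obtain a1 a2 where a: "a = (a1,a2)" by (cases a)
  have b0: "b < 0" using ab(2)[rule_format, of "(0,0)"] unfolding T_def by (simp add: a)
  have a1: "a1 \<ge> 0"
  proof (rule ccontr)
    assume "\<not> a1 \<ge> 0"
    hence "(b/a1, 0) \<in> T" using b0 unfolding T_def by (auto simp: divide_nonpos_neg)
    from ab(2)[rule_format, OF this] have "b < a1*(b/a1)" by (simp add: a)
    with \<open>\<not> a1 \<ge> 0\<close> show False by simp
  qed
  have a2: "a2 \<ge> 0"
  proof (rule ccontr)
    assume "\<not> a2 \<ge> 0"
    hence "(0, b/a2) \<in> T" using b0 unfolding T_def by (auto simp: divide_nonpos_neg)
    from ab(2)[rule_format, OF this] have "b < a2*(b/a2)" by (simp add: a)
    with \<open>\<not> a2 \<ge> 0\<close> show False by simp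
  qed
  obtain y0 where "y0 \<in> K" using ne by auto
  have "a1 + a2 > 0"
  proof (rule ccontr)
    assume "\<not> a1+a2 > 0"
    hence "a1 = 0" "a2 = 0" using a1 a2 by auto
    with ab(1) \<open>y0\<in>K\<close> b0 show False unfolding S_def by (auto simp: a)
  qed
  show ?thesis
  proof (intro exI conjI ballI)
    show "0 \<le> a1/(a1+a2)" using a1 a2 by simp
    show "a1/(a1+a2) \<le> 1" using a1 a2 \<open>a1+a2>0\<close> by simp
    fix y assume "y\<in>K"
    hence "a1 * h y + a2 * g y < b" using ab(1) unfolding S_def by (auto simp: a)
    hence *: "a1 * h y + a2 * g y < 0" using b0 by simp
    have "a1 / (a1 + a2) * h y + (1 - a1 / (a1 + a2)) * g y = (a1 * h y + a2 * g y)/(a1+a2)"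
    proof -
      have e: "1 - a1/(a1+a2) = a2/(a1+a2)" using \<open>a1+a2>0\<close> by (simp add: field_simps)
      show ?thesis by (simp only: e) (simp add: add_divide_distrib)
    qed
    also have "\<dots> < 0" using * \<open>a1+a2>0\<close> by (simp add: divide_neg_pos)
    finally show "a1 / (a1 + a2) * h y + (1 - a1 / (a1 + a2)) * g y < 0" .
  qed
qed

lemma n_minimax:
  fixes X :: "'b topology" and mix :: "real \<Rightarrow> 'b \<Rightarrow> 'b \<Rightarrow> 'b"
    and g :: "nat \<Rightarrow> 'b \<Rightarrow> real"
  assumes cpt: "compactin X K"
    and mixK: "\<And>t y z. y\<in>K \<Longrightarrow> z\<in>K \<Longrightarrow> 0\<le>t \<Longrightarrow> t\<le>1 \<Longrightarrow> mix t y z \<in> K"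
    and gaff: "\<And>i t y z. i<n \<Longrightarrow> y\<in>K \<Longrightarrow> z\<in>K \<Longrightarrow> 0\<le>t \<Longrightarrow> t\<le>1 \<Longrightarrow> g i (mix t y z) = t*g i y + (1-t)*g i z"
    and gc: "\<And>i. i<n \<Longrightarrow> continuous_map (subtopology X K) euclideanreal (g i)"
    and cov: "\<And>y. y\<in>K \<Longrightarrow> \<exists>i<n. g i y < 0"
    and ne: "K \<noteq> {}"
  shows "\<exists>t. (\<forall>i<n. 0 \<le> t i) \<and> (\<Sum>i<n. t i) = 1 \<and> (\<forall>y\<in>K. (\<Sum>i<n. t i * g i y) < 0)"
  using assms
proof (induction n arbitrary: K)
  case 0
  then show ?case by auto
next
  case (Suc n)
  define K' where "K' = {y\<in>K. 0 \<le> g n y}"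
  show ?case
  proof (cases "K' = {}")
    case True
    show ?thesis
    proof (intro exI[where x="\<lambda>i. if i = n then 1 else 0"] conjI allI impI ballI)
      fix y assume "y \<in> K"
      hence "g n y < 0" using True K'_def by auto
      thus "(\<Sum>i<Suc n. (if i = n then 1 else 0) * g i y) < 0" by simp
    qed auto
  next
    case False
    have Ksub: "K \<subseteq> topspace X" using Suc.prems(1) compactin_subset_topspace by blast
    have ctn: "continuous_map (subtopology X K) euclideanreal (g n)" using Suc.prems(4) by simp
    have "closedin (subtopology X K) {y \<in> topspace (subtopology X K). g n y \<in> {0..}}"
      by (rule closedin_continuous_map_preimage[OF ctn]) simp
    moreover have "{y \<in> topspace (subtopology X K). g n y \<in> {0..}} = K'"
      using Ksub unfolding K'_def by auto
    ultimately have "closedin (subtopology X K) K'" by simp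
    hence "compactin (subtopology X K) K'"
      using closedin_compact_space compact_space_subtopology Suc.prems(1) by blast
    hence cK': "compactin X K'" by (simp add: compactin_subtopology)
    have sub: "K' \<subseteq> K" unfolding K'_def by auto
    have "\<exists>s. (\<forall>i<n. 0 \<le> s i) \<and> (\<Sum>i<n. s i) = 1 \<and> (\<forall>y\<in>K'. (\<Sum>i<n. s i * g i y) < 0)"
    proof (rule Suc.IH[OF cK'])
      show "mix t y z \<in> K'" if "y\<in>K'" "z\<in>K'" "0\<le>t" "t\<le>1" for t y z
      proof -
        have "g n (mix t y z) = t * g n y + (1-t) * g n z"
          using Suc.prems(3)[of n y z t] that sub by auto
        moreover have "0 \<le> t * g n y + (1-t) * g n z" using that K'_def by auto
        ultimately show ?thesis using Suc.prems(2) that sub K'_def by auto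
      qed
      show "g i (mix t y z) = t * g i y + (1 - t) * g i z" if "i<n" "y\<in>K'" "z\<in>K'" "0\<le>t" "t\<le>1" for i t y z
        using Suc.prems(3)[of i y z t] that sub by auto
      show "continuous_map (subtopology X K') euclideanreal (g i)" if "i<n" for i
      proof -
        have "continuous_map (subtopology (subtopology X K) K') euclideanreal (g i)"
          using continuous_map_from_subtopology[of "subtopology X K" euclideanreal "g i" K'] Suc.prems(4)[of i] that by simp
        moreover have "K \<inter> K' = K'" using sub by auto
        ultimately show ?thesis by (simp add: subtopology_subtopology)
      qed
      show "\<exists>i<n. g i y < 0" if yK: "y \<in> K'" for y
      proof -
        obtain i where "i < Suc n" "g i y < 0" using Suc.prems(5) yK sub by blast
        moreover have "i \<noteq> n" using yK K'_def \<open>g i y < 0\<close> by auto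
        ultimately show ?thesis by (intro exI[of _ i]) (auto simp: less_Suc_eq)
      qed
    qed (use False in auto)
    then obtain s where s: "\<forall>i<n. 0 \<le> s i" "(\<Sum>i<n. s i) = 1" "\<forall>y\<in>K'. (\<Sum>i<n. s i * g i y) < 0"
      by blast
    define h where "h = (\<lambda>y. \<Sum>i<n. s i * g i y)"
    have "\<exists>r. 0\<le>r \<and> r\<le>1 \<and> (\<forall>y\<in>K. r*h y + (1-r)*g n y < 0)"
    proof (rule two_minimax[OF Suc.prems(1,2)])
      show "h (mix t y z) = t * h y + (1 - t) * h z" if "y\<in>K" "z\<in>K" "0\<le>t" "t\<le>1" for t y z
      proof -
        have "s i * g i (mix t y z) = t * (s i * g i y) + (1-t) * (s i * g i z)" if "i < n" for i
        proof -
          have e: "g i (mix t y z) = t * g i y + (1-t) * g i z"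
            using Suc.prems(3)[of i y z t] \<open>y\<in>K\<close> \<open>z\<in>K\<close> \<open>0\<le>t\<close> \<open>t\<le>1\<close> \<open>i<n\<close> by simp
          show ?thesis unfolding e by (simp add: algebra_simps)
        qed
        hence "h (mix t y z) = (\<Sum>i<n. t * (s i * g i y) + (1-t) * (s i * g i z))"
          unfolding h_def by (intro sum.cong) auto
        also have "\<dots> = t * h y + (1 - t) * h z"
          unfolding h_def by (simp add: sum.distrib sum_distrib_left)
        finally show ?thesis .
      qed
      show "g n (mix t y z) = t * g n y + (1 - t) * g n z" if "y\<in>K" "z\<in>K" "0\<le>t" "t\<le>1" for t y z
        using Suc.prems(3) that by auto
      show "continuous_map (subtopology X K) euclideanreal h" unfolding h_def
        using Suc.prems(4) by (intro continuous_map_sum continuous_intros) auto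
      show "continuous_map (subtopology X K) euclideanreal (g n)" by (rule ctn)
      show "h y < 0 \<or> g n y < 0" if "y \<in> K" for y
        using s(3) that K'_def h_def by force
    qed (use Suc.prems(6) in auto)
    then obtain r where r: "0\<le>r" "r\<le>1" "\<forall>y\<in>K. r*h y + (1-r)*g n y < 0" by blast
    show ?thesis
    proof (intro exI[where x="\<lambda>i. if i = n then 1 - r else r * s i"] conjI allI impI ballI)
      show "0 \<le> (if i = n then 1 - r else r * s i)" if "i < Suc n" for i
        using r s that by auto
      have "(\<Sum>i<Suc n. if i = n then 1 - r else r * s i) = (\<Sum>i<n. r * s i) + (1 - r)"
        by simp
      also have "\<dots> = 1" using s(2) by (simp add: sum_distrib_left[symmetric])
      finally show "(\<Sum>i<Suc n. if i = n then 1 - r else r * s i) = 1" .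
      fix y assume "y \<in> K"
      have "(\<Sum>i<Suc n. (if i = n then 1 - r else r * s i) * g i y) = r * h y + (1-r) * g n y"
        unfolding h_def by (simp add: sum_distrib_left mult.assoc)
      thus "(\<Sum>i<Suc n. (if i = n then 1 - r else r * s i) * g i y) < 0" using r(3) \<open>y\<in>K\<close> by simp
    qed
  qed
qed

context algebra begin

lemma fin_add:
  fixes \<mu> :: "'a set \<Rightarrow> real"
  assumes add: "\<forall>A\<in>M. \<forall>B\<in>M. A\<inter>B={} \<longrightarrow> \<mu>(A\<union>B) = \<mu> A + \<mu> B"
    and "finite P" "P \<subseteq> M" "disjoint P"
  shows "\<mu> (\<Union>P) = (\<Sum>B\<in>P. \<mu> B)"
  using assms(2-4)
proof (induction P rule: finite_induct)
  case empty
  have "\<mu> ({} \<union> {}) = \<mu> {} + \<mu> {}" using add[rule_format, of "{}" "{}"] by simp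
  then show ?case by simp
next
  case (insert B P)
  have dP: "disjoint P" by (rule pairwise_subset[OF insert.prems(2)]) auto
  from insert.prems(2) have "\<forall>y\<in>P. y \<noteq> B \<longrightarrow> disjnt B y" by (simp add: pairwise_insert)
  hence "\<forall>y\<in>P. disjnt B y" using insert.hyps(2) by auto
  hence dB: "B \<inter> \<Union>P = {}" unfolding disjnt_def by auto
  have PM: "P \<subseteq> M" "B \<in> M" using insert.prems(1) by auto
  have UM: "\<Union>P \<in> M" using PM insert.hyps(1) by (intro finite_Union) auto
  have "\<mu> (B \<union> \<Union>P) = \<mu> B + \<mu> (\<Union>P)" using add[rule_format, OF PM(2) UM dB] .
  also have "\<mu> (\<Union>P) = (\<Sum>C\<in>P. \<mu> C)" using insert.IH[OF PM(1) dP] .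
  finally show ?case using insert.hyps by simp
qed

lemma mu_empty:
  fixes \<mu> :: "'a set \<Rightarrow> real"
  assumes add: "\<forall>A\<in>M. \<forall>B\<in>M. A\<inter>B={} \<longrightarrow> \<mu>(A\<union>B) = \<mu> A + \<mu> B"
  shows "\<mu> {} = 0"
proof -
  have "\<mu> ({} \<union> {}) = \<mu> {} + \<mu> {}" using add[rule_format, of "{}" "{}"] by simp
  then show ?thesis by simp
qed

lemma mono_add:
  fixes \<mu> :: "'a set \<Rightarrow> real"
  assumes add: "\<forall>A\<in>M. \<forall>B\<in>M. A\<inter>B={} \<longrightarrow> \<mu>(A\<union>B) = \<mu> A + \<mu> B"
    and pos: "\<forall>A\<in>M. 0 \<le> \<mu> A" and "A \<in> M" "B \<in> M" "A \<subseteq> B"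
  shows "\<mu> A \<le> \<mu> B"
proof -
  have "B = A \<union> (B - A)" using assms by auto
  moreover have "\<mu> (A \<union> (B - A)) = \<mu> A + \<mu> (B - A)" using add[rule_format, of A "B - A"] assms by auto
  moreover have "0 \<le> \<mu> (B - A)" using pos assms by auto
  ultimately show ?thesis by simp
qed

definition "PS la A = {(\<Sum>B\<in>P. \<bar>la B\<bar>) | P. finite P \<and> P \<subseteq> M \<and> disjoint P \<and> \<Union>P = A}"

lemma tv_PS: "tv M la A = Sup (PS la A)"
  unfolding tv_def PS_def by simp

lemma PS_ne: "A \<in> M \<Longrightarrow> \<bar>la A\<bar> \<in> PS la A"
  unfolding PS_def by (rule CollectI, rule exI[where x="{A}"]) auto

lemma PS_bdd:
  assumes la: "la \<in> ba \<Omega> M" and A: "A \<in> M"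
  shows "bdd_above (PS la A)"
proof -
  have add: "\<forall>A\<in>M. \<forall>B\<in>M. A\<inter>B={} \<longrightarrow> la(A\<union>B) = la A + la B" using la unfolding ba_def by blast
  obtain K where K: "\<forall>A\<in>M. \<bar>la A\<bar> \<le> K" using la unfolding ba_def by blast
  show ?thesis
  proof (rule bdd_aboveI[where M="2*K"])
    fix x assume "x \<in> PS la A"
    then obtain P where P: "x = (\<Sum>B\<in>P. \<bar>la B\<bar>)" "finite P" "P \<subseteq> M" "disjoint P"
      unfolding PS_def by blast
    define P1 where "P1 = {B\<in>P. 0 \<le> la B}"
    define P2 where "P2 = {B\<in>P. \<not> 0 \<le> la B}"
    have "P = P1 \<union> P2" "P1 \<inter> P2 = {}" unfolding P1_def P2_def by auto
    hence "x = (\<Sum>B\<in>P1. \<bar>la B\<bar>) + (\<Sum>B\<in>P2. \<bar>la B\<bar>)"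
      unfolding P(1) using P(2) by (metis finite_Un sum.union_disjoint)
    also have "(\<Sum>B\<in>P1. \<bar>la B\<bar>) = (\<Sum>B\<in>P1. la B)" unfolding P1_def by (rule sum.cong) auto
    also have "(\<Sum>B\<in>P2. \<bar>la B\<bar>) = (\<Sum>B\<in>P2. - la B)" unfolding P2_def
      by (rule sum.cong) auto
    also have "\<dots> = - (\<Sum>B\<in>P2. la B)" by (rule sum_negf)
    also have "(\<Sum>B\<in>P1. la B) = la (\<Union>P1)"
    proof (rule fin_add[OF add, symmetric])
      show "finite P1" "P1 \<subseteq> M" using P unfolding P1_def by auto
      show "disjoint P1" by (rule pairwise_subset[OF P(4)]) (auto simp: P1_def)
    qed
    also have "(\<Sum>B\<in>P2. la B) = la (\<Union>P2)"
    proof (rule fin_add[OF add, symmetric])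
      show "finite P2" "P2 \<subseteq> M" using P unfolding P2_def by auto
      show "disjoint P2" by (rule pairwise_subset[OF P(4)]) (auto simp: P2_def)
    qed
    finally have "x = la (\<Union>P1) - la (\<Union>P2)" by simp
    moreover have "\<Union>P1 \<in> M" "\<Union>P2 \<in> M" using P unfolding P1_def P2_def by auto
    ultimately have "x = la (\<Union>P1) - la (\<Union>P2)" "\<bar>la (\<Union>P1)\<bar> \<le> K" "\<bar>la (\<Union>P2)\<bar> \<le> K"
      using K by auto
    thus "x \<le> 2*K" by (simp add: abs_le_iff)
  qed
qed

lemma tv_ge:
  assumes la: "la \<in> ba \<Omega> M" and A: "A \<in> M" and x: "x \<in> PS la A"
  shows "x \<le> tv M la A"
  unfolding tv_PS using PS_bdd[OF la A] x by (rule cSup_upper[rotated])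

lemma tv_le:
  assumes A: "A \<in> M" and x: "\<And>x. x \<in> PS la A \<Longrightarrow> x \<le> z"
  shows "tv M la A \<le> z"
  unfolding tv_PS using PS_ne[OF A] x by (intro cSup_least) auto

lemma tv_nonneg:
  assumes la: "la \<in> ba \<Omega> M" and A: "A \<in> M"
  shows "0 \<le> tv M la A"
  using tv_ge[OF la A PS_ne[OF A]] by linarith

lemma tv_pos_eq:
  assumes mu: "\<mu> \<in> ba_pos \<Omega> M" and A: "A \<in> M"
  shows "tv M \<mu> A = \<mu> A"
proof -
  have add: "\<forall>A\<in>M. \<forall>B\<in>M. A\<inter>B={} \<longrightarrow> \<mu>(A\<union>B) = \<mu> A + \<mu> B"
    and pos: "\<forall>A\<in>M. 0 \<le> \<mu> A" using mu unfolding ba_pos_def ba_def by auto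
  have "PS \<mu> A = {\<mu> A}"
  proof
    show "PS \<mu> A \<subseteq> {\<mu> A}"
    proof
      fix x assume "x \<in> PS \<mu> A"
      then obtain P where P: "x = (\<Sum>B\<in>P. \<bar>\<mu> B\<bar>)" "finite P" "P \<subseteq> M" "disjoint P" "\<Union>P = A"
        unfolding PS_def by blast
      have "x = (\<Sum>B\<in>P. \<mu> B)" unfolding P(1) using P(3) pos by (intro sum.cong) auto
      also have "\<dots> = \<mu> A" using fin_add[OF add P(2-4)] P(5) by simp
      finally show "x \<in> {\<mu> A}" by simp
    qed
    show "{\<mu> A} \<subseteq> PS \<mu> A" using PS_ne[OF A, of \<mu>] pos A by auto
  qed
  then show ?thesis unfolding tv_PS by simp
qed

end

context algebra begin

lemma PS_restrict:
  assumes la: "la \<in> ba \<Omega> M" and P: "finite P" "P \<subseteq> M" "disjoint P" and A: "A \<in> M"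
  shows "(\<Sum>C\<in>P. \<bar>la (C \<inter> A)\<bar>) \<in> PS la (\<Union>P \<inter> A)"
proof -
  have add: "\<forall>A\<in>M. \<forall>B\<in>M. A\<inter>B={} \<longrightarrow> la(A\<union>B) = la A + la B" using la unfolding ba_def by blast
  have l0: "la {} = 0" by (rule mu_empty[OF add])
  define P' where "P' = {C\<in>P. C \<inter> A \<noteq> {}}"
  define Q where "Q = (\<lambda>C. C \<inter> A) ` P'"
  have "(\<Sum>C\<in>P. \<bar>la (C \<inter> A)\<bar>) = (\<Sum>C\<in>P'. \<bar>la (C \<inter> A)\<bar>)"
    by (rule sum.mono_neutral_right) (use P l0 in \<open>auto simp: P'_def\<close>)
  also have inj: "inj_on (\<lambda>C. C \<inter> A) P'"
  proof (rule inj_onI)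
    fix C D assume "C \<in> P'" "D \<in> P'" "C \<inter> A = D \<inter> A"
    then show "C = D" using P(3) unfolding P'_def pairwise_def disjnt_def by blast
  qed
  then have "(\<Sum>C\<in>P'. \<bar>la (C \<inter> A)\<bar>) = (\<Sum>D\<in>Q. \<bar>la D\<bar>)"
    unfolding Q_def by (simp add: sum.reindex)
  finally have eq: "(\<Sum>C\<in>P. \<bar>la (C \<inter> A)\<bar>) = (\<Sum>D\<in>Q. \<bar>la D\<bar>)" .
  have "finite Q" using P(1) unfolding Q_def P'_def by auto
  moreover have "Q \<subseteq> M" using P(2) A unfolding Q_def P'_def by auto
  moreover have "disjoint Q" using P(3) unfolding Q_def P'_def pairwise_def disjnt_def by blast
  moreover have "\<Union>Q = \<Union>P \<inter> A" unfolding Q_def P'_def by auto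
  ultimately show ?thesis unfolding eq PS_def by blast
qed

lemma PS_union:
  assumes la: "la \<in> ba \<Omega> M" and x: "x \<in> PS la A" and y: "y \<in> PS la B" and AB: "A \<inter> B = {}"
  shows "x + y \<in> PS la (A \<union> B)"
proof -
  have add: "\<forall>A\<in>M. \<forall>B\<in>M. A\<inter>B={} \<longrightarrow> la(A\<union>B) = la A + la B" using la unfolding ba_def by blast
  have l0: "la {} = 0" by (rule mu_empty[OF add])
  obtain P where P: "x = (\<Sum>C\<in>P. \<bar>la C\<bar>)" "finite P" "P \<subseteq> M" "disjoint P" "\<Union>P = A"
    using x unfolding PS_def by blast
  obtain Q where Q: "y = (\<Sum>C\<in>Q. \<bar>la C\<bar>)" "finite Q" "Q \<subseteq> M" "disjoint Q" "\<Union>Q = B"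
    using y unfolding PS_def by blast
  have e: "\<forall>C\<in>P\<inter>Q. C = {}" using P(5) Q(5) AB by blast
  have "\<forall>C\<in>P\<inter>Q. \<bar>la C\<bar> = 0"
  proof
    fix C assume "C \<in> P\<inter>Q"
    then have "C = {}" using e by blast
    then show "\<bar>la C\<bar> = 0" using l0 by simp
  qed
  hence "(\<Sum>C\<in>P\<inter>Q. \<bar>la C\<bar>) = 0" by (rule sum.neutral)
  hence "(\<Sum>C\<in>P\<union>Q. \<bar>la C\<bar>) = x + y"
    using sum.union_inter[OF P(2) Q(2), of "\<lambda>C. \<bar>la C\<bar>"] P(1) Q(1) by simp
  moreover have "disjoint (P \<union> Q)"
    using P(4,5) Q(4,5) AB unfolding pairwise_def disjnt_def by blast
  moreover have "finite (P \<union> Q)" "P \<union> Q \<subseteq> M" "\<Union>(P\<union>Q) = A \<union> B" using P Q by auto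
  ultimately show ?thesis unfolding PS_def by (intro CollectI exI[of _ "P \<union> Q"]) auto
qed

lemma tv_add:
  assumes la: "la \<in> ba \<Omega> M" and A: "A \<in> M" "B \<in> M" "A \<inter> B = {}"
  shows "tv M la (A \<union> B) = tv M la A + tv M la B"
proof (rule antisym)
  have add: "\<forall>A\<in>M. \<forall>B\<in>M. A\<inter>B={} \<longrightarrow> la(A\<union>B) = la A + la B" using la unfolding ba_def by blast
  have AB: "A \<union> B \<in> M" using A by auto
  show "tv M la (A \<union> B) \<le> tv M la A + tv M la B"
  proof (rule tv_le[OF AB])
    fix x assume "x \<in> PS la (A \<union> B)"
    then obtain P where P: "x = (\<Sum>C\<in>P. \<bar>la C\<bar>)" "finite P" "P \<subseteq> M" "disjoint P" "\<Union>P = A \<union> B"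
      unfolding PS_def by blast
    have "x \<le> (\<Sum>C\<in>P. \<bar>la (C \<inter> A)\<bar> + \<bar>la (C \<inter> B)\<bar>)"
      unfolding P(1)
    proof (rule sum_mono)
      fix C assume C: "C \<in> P"
      hence "C = (C \<inter> A) \<union> (C \<inter> B)" using P(5) by blast
      moreover have "C \<inter> A \<in> M" "C \<inter> B \<in> M" using C P(3) A by auto
      ultimately have "la C = la (C \<inter> A) + la (C \<inter> B)" using add A(3)
        by (metis Int_Un_distrib Un_Int_eq(3) inf_bot_right inf_commute inf_left_commute)
      thus "\<bar>la C\<bar> \<le> \<bar>la (C \<inter> A)\<bar> + \<bar>la (C \<inter> B)\<bar>" by simp
    qed
    also have "\<dots> = (\<Sum>C\<in>P. \<bar>la (C \<inter> A)\<bar>) + (\<Sum>C\<in>P. \<bar>la (C \<inter> B)\<bar>)"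
      by (rule sum.distrib)
    also have "\<dots> \<le> tv M la A + tv M la B"
    proof (rule add_mono)
      have "\<Union>P \<inter> A = A" using P(5) by blast
      thus "(\<Sum>C\<in>P. \<bar>la (C \<inter> A)\<bar>) \<le> tv M la A"
        using PS_restrict[OF la P(2-4) A(1)] by (intro tv_ge[OF la A(1)]) simp
      have "\<Union>P \<inter> B = B" using P(5) by blast
      thus "(\<Sum>C\<in>P. \<bar>la (C \<inter> B)\<bar>) \<le> tv M la B"
        using PS_restrict[OF la P(2-4) A(2)] by (intro tv_ge[OF la A(2)]) simp
    qed
    finally show "x \<le> tv M la A + tv M la B" .
  qed
  have "\<forall>y\<in>PS la B. tv M la A \<le> tv M la (A \<union> B) - y"
  proof
    fix y assume y: "y \<in> PS la B"
    show "tv M la A \<le> tv M la (A \<union> B) - y"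
    proof (rule tv_le[OF A(1)])
      fix x assume "x \<in> PS la A"
      from tv_ge[OF la AB PS_union[OF la this y A(3)]] show "x \<le> tv M la (A \<union> B) - y" by simp
    qed
  qed
  hence "tv M la B \<le> tv M la (A \<union> B) - tv M la A"
    by (intro tv_le[OF A(2)]) auto
  thus "tv M la A + tv M la B \<le> tv M la (A \<union> B)" by simp
qed

definition lev :: "(nat \<Rightarrow> 'a set) \<Rightarrow> (nat \<Rightarrow> real) \<Rightarrow> nat \<Rightarrow> real \<Rightarrow> 'a set" where
  "lev C t n c = {x\<in>\<Omega>. c \<le> (\<Sum>i<n. if x \<in> C i then t i else 0)}"

lemma lev_Suc: "lev C t (Suc n) c = (C n \<inter> lev C t n (c - t n)) \<union> ((\<Omega> - C n) \<inter> lev C t n c)"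
  unfolding lev_def by auto

lemma lev_in:
  assumes C: "\<forall>i. C i \<in> M"
  shows "lev C t n c \<in> M"
proof (induction n arbitrary: c)
  case 0
  then show ?case unfolding lev_def by (cases "c \<le> 0") auto
next
  case (Suc n)
  have a: "C n \<inter> lev C t n (c - t n) \<in> M" using C Suc by blast
  have b: "(\<Omega> - C n) \<inter> lev C t n c \<in> M" using C Suc by blast
  show ?case unfolding lev_Suc using a b by blast
qed

lemma markov:
  fixes \<nu> :: "'a set \<Rightarrow> real"
  assumes add: "\<forall>A\<in>M. \<forall>B\<in>M. A\<inter>B={} \<longrightarrow> \<nu>(A\<union>B) = \<nu> A + \<nu> B"
    and pos: "\<forall>A\<in>M. 0 \<le> \<nu> A" and C: "\<forall>i. C i \<in> M" and t: "\<forall>i. 0 \<le> t i"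
  shows "E \<in> M \<Longrightarrow> 0 < c \<Longrightarrow> c * \<nu> (E \<inter> lev C t n c) \<le> (\<Sum>i<n. t i * \<nu> (E \<inter> C i))"
proof (induction n arbitrary: c E)
  case 0
  hence "E \<inter> lev C t 0 c = {}" unfolding lev_def by auto
  then show ?case using mu_empty[OF add] by simp
next
  case (Suc n)
  have mono: "\<And>A B. A \<in> M \<Longrightarrow> B \<in> M \<Longrightarrow> A \<subseteq> B \<Longrightarrow> \<nu> A \<le> \<nu> B"
    using mono_add[OF add pos] by blast
  define X where "X = E \<inter> C n \<inter> lev C t n (c - t n)"
  define Y where "Y = (E - C n) \<inter> lev C t n c"
  have L1: "lev C t n (c - t n) \<in> M" "lev C t n c \<in> M" using lev_in[OF C] by auto
  have XM: "X \<in> M" unfolding X_def using L1 C Suc.prems by blast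
  have YM: "Y \<in> M" unfolding Y_def using L1 C Suc.prems by blast
  have "E \<inter> lev C t (Suc n) c = X \<union> Y" unfolding X_def Y_def lev_Suc using Suc.prems(1) sets_into_space by blast
  moreover have "X \<inter> Y = {}" unfolding X_def Y_def by auto
  ultimately have split: "\<nu> (E \<inter> lev C t (Suc n) c) = \<nu> X + \<nu> Y" using add XM YM by simp
  have EC: "E \<inter> C n \<in> M" using C Suc.prems by auto
  have Yb: "c * \<nu> Y \<le> (\<Sum>i<n. t i * \<nu> ((E - C n) \<inter> C i))"
    unfolding Y_def using Suc.IH[of "E - C n" c] Suc.prems C by auto
  have XE: "\<nu> X \<le> \<nu> (E \<inter> C n)" by (rule mono[OF XM EC]) (auto simp: X_def)
  have Xb: "c * \<nu> X \<le> (\<Sum>i<n. t i * \<nu> (E \<inter> C n \<inter> C i)) + t n * \<nu> (E \<inter> C n)"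
  proof (cases "c \<le> t n")
    case True
    have "c * \<nu> X \<le> t n * \<nu> X" using True pos XM by (simp add: mult_right_mono)
    also have "\<dots> \<le> t n * \<nu> (E \<inter> C n)" using XE t by (simp add: mult_left_mono)
    finally have "c * \<nu> X \<le> t n * \<nu> (E \<inter> C n)" .
    moreover have "0 \<le> (\<Sum>i<n. t i * \<nu> (E \<inter> C n \<inter> C i))"
    proof (intro sum_nonneg mult_nonneg_nonneg)
      fix i show "0 \<le> t i" using t by auto
      have "E \<inter> C n \<inter> C i \<in> M" using C Suc.prems by blast
      thus "0 \<le> \<nu> (E \<inter> C n \<inter> C i)" using pos by blast
    qed
    ultimately show ?thesis by linarith
  next
    case False
    have "(c - t n) * \<nu> ((E \<inter> C n) \<inter> lev C t n (c - t n)) \<le> (\<Sum>i<n. t i * \<nu> (E \<inter> C n \<inter> C i))"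
      using Suc.IH[OF EC] False by simp
    hence "(c - t n) * \<nu> X \<le> (\<Sum>i<n. t i * \<nu> (E \<inter> C n \<inter> C i))" unfolding X_def by (simp add: Int_assoc)
    moreover have "t n * \<nu> X \<le> t n * \<nu> (E \<inter> C n)" using XE t by (simp add: mult_left_mono)
    ultimately show ?thesis by (simp add: left_diff_distrib)
  qed
  have eqi: "\<nu> (E \<inter> C n \<inter> C i) + \<nu> ((E - C n) \<inter> C i) = \<nu> (E \<inter> C i)" for i
  proof -
    have "E \<inter> C i = (E \<inter> C n \<inter> C i) \<union> ((E - C n) \<inter> C i)" by blast
    moreover have "(E \<inter> C n \<inter> C i) \<in> M" "((E - C n) \<inter> C i) \<in> M" using C Suc.prems by auto
    ultimately show ?thesis using add by (metis Diff_disjoint inf_assoc inf_bot_left inf_left_commute)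
  qed
  have "c * \<nu> (E \<inter> lev C t (Suc n) c) = c * \<nu> X + c * \<nu> Y" by (simp add: split distrib_left)
  also have "\<dots> \<le> (\<Sum>i<n. t i * \<nu> (E \<inter> C n \<inter> C i)) + (\<Sum>i<n. t i * \<nu> ((E - C n) \<inter> C i)) + t n * \<nu> (E \<inter> C n)"
    using Xb Yb by simp
  also have "(\<Sum>i<n. t i * \<nu> (E \<inter> C n \<inter> C i)) + (\<Sum>i<n. t i * \<nu> ((E - C n) \<inter> C i)) = (\<Sum>i<n. t i * \<nu> (E \<inter> C i))"
    by (simp add: sum.distrib[symmetric] distrib_left[symmetric] eqi)
  finally show ?case by simp
qed

end

context algebra begin
lemma sub_sp: "B \<in> M \<Longrightarrow> B \<subseteq> \<Omega>" using sets_into_space by blast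
lemma emp_in: "{} \<in> M" by simp
end

definition ind :: "'a set \<Rightarrow> 'a \<Rightarrow> real" where "ind B = (\<lambda>x. if x \<in> B then 1 else 0)"

lemma ind_simple_fn:
  assumes alg: "algebra \<Omega> \<A>" and B: "B \<in> \<A>"
  shows "simple_fn \<Omega> \<A> (ind B)"
  unfolding simple_fn_def
proof
  show "finite (ind B ` \<Omega>)"
    by (rule finite_subset[of _ "{0,1}"]) (auto simp: ind_def)
  have Bs: "B \<subseteq> \<Omega>" using algebra.sub_sp[OF alg B] .
  show "\<forall>y. {x \<in> \<Omega>. ind B x = y} \<in> \<A>"
  proof
    fix y :: real
    consider "y = 1" | "y = 0" | "y \<noteq> 0 \<and> y \<noteq> 1" by blast
    then show "{x \<in> \<Omega>. ind B x = y} \<in> \<A>"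
    proof cases
      case 1
      hence "{x \<in> \<Omega>. ind B x = y} = B" using Bs by (auto simp: ind_def)
      thus ?thesis using B by simp
    next
      case 2
      hence "{x \<in> \<Omega>. ind B x = y} = \<Omega> - B" by (auto simp: ind_def)
      thus ?thesis using B algebra.compl_sets[OF alg] by simp
    next
      case 3
      hence eq: "{x \<in> \<Omega>. ind B x = y} = {}" by (auto simp: ind_def)
      show ?thesis by (subst eq) (rule algebra.emp_in[OF alg])
    qed
  qed
qed

lemma ind_simple_int:
  fixes \<nu> :: "'a set \<Rightarrow> real"
  assumes e: "\<nu> {} = 0" and Bs: "B \<subseteq> \<Omega>"
  shows "simple_int \<Omega> \<nu> (ind B) = \<nu> B"
proof -
  let ?g = "\<lambda>y. y * \<nu> {x \<in> \<Omega>. ind B x = y}"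
  have "simple_int \<Omega> \<nu> (ind B) = sum ?g (ind B ` \<Omega>)" unfolding simple_int_def ..
  also have "\<dots> = sum ?g {0,1}"
  proof (rule sum.mono_neutral_left)
    show "ind B ` \<Omega> \<subseteq> {0,1}" by (auto simp: ind_def)
    show "\<forall>i\<in>{0,1} - ind B ` \<Omega>. ?g i = 0"
    proof
      fix i assume "i \<in> {0,1} - ind B ` \<Omega>"
      hence eq: "{x \<in> \<Omega>. ind B x = i} = {}" by auto
      show "?g i = 0" by (subst eq) (simp add: e)
    qed
  qed simp
  also have "\<dots> = \<nu> {x \<in> \<Omega>. ind B x = 1}" by simp
  also have "{x \<in> \<Omega>. ind B x = 1} = B" using Bs by (auto simp: ind_def)
  finally show ?thesis .
qed

lemma wstar_open:
  assumes alg: "algebra \<Omega> \<A>" and B: "B \<in> \<A>" and U: "open U"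
  shows "openin (wstar \<Omega> \<A>) {\<nu>. simple_int \<Omega> \<nu> (ind B) \<in> U}"
  unfolding wstar_def openin_topology_generated_by_iff
  by (rule generate_topology_on.Basis) (use ind_simple_fn[OF alg B] U in blast)

lemma wstar_cont:
  assumes alg: "algebra \<Omega> \<A>" and B: "B \<in> \<A>" and Mb: "M \<subseteq> ba \<Omega> \<A>"
    and Mt: "M \<subseteq> topspace (wstar \<Omega> \<A>)"
  shows "continuous_map (subtopology (wstar \<Omega> \<A>) M) euclideanreal (\<lambda>\<nu>. \<nu> B + r)"
  unfolding continuous_map_def
proof (intro conjI allI impI)
  show "(\<lambda>\<nu>. \<nu> B + r) \<in> topspace (subtopology (wstar \<Omega> \<A>) M) \<rightarrow> topspace euclideanreal" by simp
  fix U :: "real set" assume "openin euclideanreal U"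
  hence oU: "open U" by simp
  define U' where "U' = (\<lambda>y. y + r) -` U"
  have "open U'" unfolding U'_def using oU by (intro open_vimage continuous_intros) auto
  hence W: "openin (wstar \<Omega> \<A>) {\<nu>. simple_int \<Omega> \<nu> (ind B) \<in> U'}" by (rule wstar_open[OF alg B])
  have Bs: "B \<subseteq> \<Omega>" using algebra.sub_sp[OF alg B] .
  have "{x \<in> topspace (subtopology (wstar \<Omega> \<A>) M). x B + r \<in> U} = {\<nu>. simple_int \<Omega> \<nu> (ind B) \<in> U'} \<inter> M"
  proof -
    have "simple_int \<Omega> \<nu> (ind B) = \<nu> B" if "\<nu> \<in> M" for \<nu>
    proof (rule ind_simple_int[OF _ Bs])
      have add: "\<forall>A\<in>\<A>. \<forall>B\<in>\<A>. A\<inter>B={} \<longrightarrow> \<nu>(A\<union>B) = \<nu> A + \<nu> B"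
        using Mb that unfolding ba_def by blast
      show "\<nu> {} = 0" by (rule algebra.mu_empty[OF alg add])
    qed
    thus ?thesis using Mt unfolding U'_def by auto
  qed
  thus "openin (subtopology (wstar \<Omega> \<A>) M) {x \<in> topspace (subtopology (wstar \<Omega> \<A>) M). x B + r \<in> U}"
    using W by (auto simp: openin_subtopology)
qed

theorem mainTheorem3:
  fixes \<Omega> :: "'a set" and \<A> :: "'a set set"
    and la :: "'a set \<Rightarrow> real" and M :: "('a set \<Rightarrow> real) set"
  assumes "algebra \<Omega> \<A>"
    and "la \<in> ba \<Omega> \<A>"
    and "M \<subseteq> ba_pos \<Omega> \<A>"
    and "convex_sf M"
    and "compactin (wstar \<Omega> \<A>) M"
  shows "(\<forall>\<mu>\<in>M. singular \<Omega> \<A> la \<mu>) \<longleftrightarrow> unif_singular \<Omega> \<A> la M"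
proof
  interpret algebra \<Omega> \<A> by (rule assms(1))
  assume S: "\<forall>\<mu>\<in>M. singular \<Omega> \<A> la \<mu>"
  show "unif_singular \<Omega> \<A> la M"
    unfolding unif_singular_def
  proof (intro allI impI)
    fix \<epsilon> :: real assume \<epsilon>: "\<epsilon> > 0"
    show "\<exists>A\<in>\<A>. \<exists>c. (\<forall>\<mu>\<in>M. tv \<A> \<mu> A \<le> c) \<and> c + tv \<A> la (\<Omega> - A) < \<epsilon>"
    proof (cases "M = {}")
      case True
      show ?thesis
        by (rule bexI[of _ "{}"], rule exI[of _ "- tv \<A> la (\<Omega> - {})"]) (use True \<epsilon> in auto)
    next
      case False
      define \<delta> where "\<delta> = \<epsilon>/4"
      have \<delta>: "\<delta> > 0" using \<epsilon> by (simp add: \<delta>_def)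
      define \<rho> where "\<rho> = tv \<A> la"
      have Mb: "M \<subseteq> ba \<Omega> \<A>" using assms(3) unfolding ba_pos_def by auto
      have addM: "\<forall>A\<in>\<A>. \<forall>B\<in>\<A>. A\<inter>B={} \<longrightarrow> \<nu>(A\<union>B) = \<nu> A + \<nu> B" if "\<nu> \<in> M" for \<nu>
        using Mb that unfolding ba_def by blast
      have posM: "\<forall>A\<in>\<A>. 0 \<le> \<nu> A" if "\<nu> \<in> M" for \<nu>
        using assms(3) that unfolding ba_pos_def by blast
      have simpint: "simple_int \<Omega> \<nu> (ind B) = \<nu> B" if "\<nu> \<in> M" "B \<in> \<A>" for \<nu> B
        by (rule ind_simple_int) (rule mu_empty[OF addM[OF that(1)]], rule sub_sp[OF that(2)])
      have "\<forall>\<mu>\<in>M. \<exists>B\<in>\<A>. \<mu> B + \<rho> (\<Omega> - B) < \<delta>"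
      proof
        fix \<mu> assume \<mu>: "\<mu> \<in> M"
        obtain A where A: "A \<in> \<A>" "tv \<A> la A + tv \<A> \<mu> (\<Omega> - A) < \<delta>"
          using S \<mu> \<delta> unfolding singular_def by blast
        have As: "A \<subseteq> \<Omega>" by (rule sub_sp[OF A(1)])
        have C: "\<Omega> - A \<in> \<A>" using A(1) by blast
        have "tv \<A> \<mu> (\<Omega> - A) = \<mu> (\<Omega> - A)" using tv_pos_eq[OF _ C] \<mu> assms(3) by auto
        moreover have "\<Omega> - (\<Omega> - A) = A" using As by auto
        ultimately show "\<exists>B\<in>\<A>. \<mu> B + \<rho> (\<Omega> - B) < \<delta>"
          using A C unfolding \<rho>_def by (intro bexI[of _ "\<Omega> - A"]) auto
      qed
      then obtain Bf where Bf: "\<forall>\<mu>\<in>M. Bf \<mu> \<in> \<A> \<and> \<mu> (Bf \<mu>) + \<rho> (\<Omega> - Bf \<mu>) < \<delta>"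
        by (metis (no_types, lifting) bchoice)
      define U where "U = (\<lambda>\<mu>. {\<nu>. simple_int \<Omega> \<nu> (ind (Bf \<mu>)) \<in> {..< \<delta> - \<rho> (\<Omega> - Bf \<mu>)}})"
      have Uo: "\<forall>u\<in>U ` M. openin (wstar \<Omega> \<A>) u"
      proof
        fix u assume "u \<in> U ` M"
        then obtain \<mu> where \<mu>: "\<mu> \<in> M" "u = U \<mu>" by blast
        have "Bf \<mu> \<in> \<A>" using Bf \<mu> by blast
        from wstar_open[OF assms(1) this, of "{..< \<delta> - \<rho> (\<Omega> - Bf \<mu>)}"]
        show "openin (wstar \<Omega> \<A>) u" unfolding \<mu>(2) U_def by simp
      qed
      have cov: "M \<subseteq> \<Union>(U ` M)"
      proof
        fix \<mu> assume \<mu>: "\<mu> \<in> M"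
        hence "\<mu> \<in> U \<mu>" unfolding U_def using Bf simpint[OF \<mu>] by auto
        thus "\<mu> \<in> \<Union>(U ` M)" using \<mu> by blast
      qed
      have Mt: "M \<subseteq> topspace (wstar \<Omega> \<A>)" using assms(5) compactin_subset_topspace by blast
      have "\<exists>F. finite F \<and> F \<subseteq> U ` M \<and> M \<subseteq> \<Union>F"
        using assms(5) Uo cov unfolding compactin_def by blast
      then obtain F where F: "finite F" "F \<subseteq> U ` M" "M \<subseteq> \<Union>F" by blast
      obtain N where N: "N \<subseteq> M" "finite N" "F = U ` N" using finite_subset_image[OF F(1,2)] by blast
      define n where "n = card N"
      obtain e where e: "bij_betw e {0..<n} N" using ex_bij_betw_nat_finite[OF N(2)] n_def by blast
      define Cs where "Cs = (\<lambda>i. if i < n then Bf (e i) else {})"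
      define a where "a = (\<lambda>i. \<rho> (\<Omega> - Cs i))"
      have eN: "e i \<in> N" if "i < n" for i using bij_betw_apply[OF e] that by auto
      have CsA: "\<forall>i. Cs i \<in> \<A>"
        unfolding Cs_def using eN N(1) Bf by auto
      have cover: "\<exists>i<n. \<nu> (Cs i) + a i - \<delta> < 0" if \<nu>M: "\<nu> \<in> M" for \<nu>
      proof -
        obtain \<mu> where \<mu>: "\<mu> \<in> N" "\<nu> \<in> U \<mu>" using F(3) N(3) \<nu>M by auto
        obtain i where i: "i < n" "e i = \<mu>" using bij_betw_imp_surj_on[OF e] \<mu>(1) by force
        have "\<mu> \<in> M" using \<mu>(1) N(1) by auto
        hence "Bf \<mu> \<in> \<A>" using Bf by auto
        hence "\<nu> (Bf \<mu>) < \<delta> - \<rho> (\<Omega> - Bf \<mu>)" using \<mu>(2) simpint[OF \<nu>M] unfolding U_def by auto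
        thus ?thesis using i unfolding Cs_def a_def by (intro exI[of _ i]) auto
      qed
      have "\<exists>t. (\<forall>i<n. 0 \<le> t i) \<and> (\<Sum>i<n. t i) = 1 \<and>
               (\<forall>y\<in>M. (\<Sum>i<n. t i * (y (Cs i) + a i - \<delta>)) < 0)"
      proof (rule n_minimax[of "wstar \<Omega> \<A>" M "\<lambda>t \<mu> \<nu>. (\<lambda>A. t * \<mu> A + (1-t) * \<nu> A)"])
        show "compactin (wstar \<Omega> \<A>) M" by (rule assms(5))
        show "(\<lambda>A. t * y A + (1 - t) * z A) \<in> M" if "y \<in> M" "z \<in> M" "0 \<le> t" "t \<le> 1" for t y z
          using assms(4) that unfolding convex_sf_def by blast
        show "t * y (Cs i) + (1 - t) * z (Cs i) + a i - \<delta> = t * (y (Cs i) + a i - \<delta>) + (1 - t) * (z (Cs i) + a i - \<delta>)"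
          for i t y z by (simp add: algebra_simps)
        show "continuous_map (subtopology (wstar \<Omega> \<A>) M) euclideanreal (\<lambda>y. y (Cs i) + a i - \<delta>)" for i
          using wstar_cont[OF assms(1) _ Mb Mt, of "Cs i" "a i - \<delta>"] CsA by (simp add: add_diff_eq)
        show "\<exists>i<n. y (Cs i) + a i - \<delta> < 0" if "y \<in> M" for y using cover that .
      qed (use False in auto)
      then obtain t where t: "\<forall>i<n. 0 \<le> t i" "(\<Sum>i<n. t i) = 1"
        "\<forall>y\<in>M. (\<Sum>i<n. t i * (y (Cs i) + a i - \<delta>)) < 0" by blast
      define t' where "t' = (\<lambda>i. if i < n then t i else 0)"
      have t'pos: "\<forall>i. 0 \<le> t' i" using t(1) unfolding t'_def by auto
      have t'sum: "(\<Sum>i<n. t' i) = 1" using t(2) unfolding t'_def by simp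
      define Cc where "Cc = (\<lambda>i. \<Omega> - Cs i)"
      have CcA: "\<forall>i. Cc i \<in> \<A>" unfolding Cc_def using CsA by blast
      define L where "L = lev Cc t' n (1/2)"
      have LA: "L \<in> \<A>" unfolding L_def by (rule lev_in[OF CcA])
      have Ls: "L \<subseteq> \<Omega>" unfolding L_def lev_def by auto
      define A where "A = \<Omega> - L"
      have AA: "A \<in> \<A>" unfolding A_def using LA by blast
      have cA: "\<Omega> - A = L" unfolding A_def using Ls by auto
      have add\<rho>: "\<forall>A\<in>\<A>. \<forall>B\<in>\<A>. A\<inter>B={} \<longrightarrow> \<rho>(A\<union>B) = \<rho> A + \<rho> B"
        unfolding \<rho>_def using tv_add[OF assms(2)] by blast
      have pos\<rho>: "\<forall>A\<in>\<A>. 0 \<le> \<rho> A" unfolding \<rho>_def using tv_nonneg[OF assms(2)] by blast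
      have "(1/2) * \<rho> (\<Omega> \<inter> L) \<le> (\<Sum>i<n. t' i * \<rho> (\<Omega> \<inter> Cc i))"
        unfolding L_def by (rule markov[OF add\<rho> pos\<rho> CcA t'pos]) auto
      also have "\<dots> = (\<Sum>i<n. t i * a i)"
      proof -
        have "\<And>i. \<Omega> \<inter> (\<Omega> - Cs i) = \<Omega> - Cs i" by blast
        thus ?thesis unfolding t'_def a_def Cc_def by (intro sum.cong) auto
      qed
      finally have R: "\<rho> L \<le> 2 * (\<Sum>i<n. t i * a i)" using LA by simp
      have key: "\<nu> A + \<rho> (\<Omega> - A) \<le> 2 * \<delta>" if \<nu>: "\<nu> \<in> M" for \<nu>
      proof -
        define L2 where "L2 = lev Cs t' n (1/2)"
        have L2A: "L2 \<in> \<A>" unfolding L2_def by (rule lev_in[OF CsA])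
        have "A \<subseteq> L2"
        proof
          fix x assume "x \<in> A"
          hence x: "x \<in> \<Omega>" "\<not> 1/2 \<le> (\<Sum>i<n. if x \<in> Cc i then t' i else 0)"
            unfolding A_def L_def lev_def by auto
          have "(\<Sum>i<n. if x \<in> Cs i then t' i else 0) + (\<Sum>i<n. if x \<in> Cc i then t' i else 0)
                = (\<Sum>i<n. t' i)"
            unfolding sum.distrib[symmetric] Cc_def using x(1) by (intro sum.cong) auto
          hence "1/2 \<le> (\<Sum>i<n. if x \<in> Cs i then t' i else 0)" using x(2) t'sum by linarith
          thus "x \<in> L2" unfolding L2_def lev_def using x(1) by auto
        qed
        hence "\<nu> A \<le> \<nu> L2" by (rule mono_add[OF addM[OF \<nu>] posM[OF \<nu>] AA L2A])
        moreover have "(1/2) * \<nu> (\<Omega> \<inter> L2) \<le> (\<Sum>i<n. t' i * \<nu> (\<Omega> \<inter> Cs i))"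
          unfolding L2_def by (rule markov[OF addM[OF \<nu>] posM[OF \<nu>] CsA t'pos]) auto
        moreover have "(\<Sum>i<n. t' i * \<nu> (\<Omega> \<inter> Cs i)) = (\<Sum>i<n. t i * \<nu> (Cs i))"
          unfolding t'_def using CsA by (intro sum.cong) auto
        moreover have "\<Omega> \<inter> L2 = L2" using L2A by simp
        ultimately have V: "\<nu> A \<le> 2 * (\<Sum>i<n. t i * \<nu> (Cs i))" by simp
        have "(\<Sum>i<n. t i * (\<nu> (Cs i) + a i - \<delta>)) = (\<Sum>i<n. t i * \<nu> (Cs i)) + (\<Sum>i<n. t i * a i) - (\<Sum>i<n. t i) * \<delta>"
          by (simp add: sum.distrib sum_subtractf sum_distrib_right sum_distrib_left algebra_simps)
        hence "(\<Sum>i<n. t i * \<nu> (Cs i)) + (\<Sum>i<n. t i * a i) < \<delta>" using t(2,3) \<nu> by auto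
        thus ?thesis using V R unfolding cA by linarith
      qed
      show ?thesis
      proof (intro bexI[OF _ AA] exI[of _ "2*\<delta> - \<rho> (\<Omega> - A)"] conjI ballI)
        fix \<nu> assume \<nu>: "\<nu> \<in> M"
        have "tv \<A> \<nu> A = \<nu> A" using tv_pos_eq[OF _ AA] \<nu> assms(3) by auto
        thus "tv \<A> \<nu> A \<le> 2*\<delta> - \<rho> (\<Omega> - A)" using key[OF \<nu>] by simp
      next
        show "2*\<delta> - \<rho> (\<Omega> - A) + tv \<A> la (\<Omega> - A) < \<epsilon>" unfolding \<rho>_def \<delta>_def using \<epsilon> by simp
      qed
    qed
  qed
next
  interpret algebra \<Omega> \<A> by (rule assms(1))
  assume U: "unif_singular \<Omega> \<A> la M"
  show "\<forall>\<mu>\<in>M. singular \<Omega> \<A> la \<mu>"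
  proof
    fix \<mu> assume \<mu>: "\<mu> \<in> M"
    show "singular \<Omega> \<A> la \<mu>" unfolding singular_def
    proof (intro allI impI)
      fix \<epsilon> :: real assume "\<epsilon> > 0"
      then obtain A c where A: "A \<in> \<A>" "\<forall>\<mu>\<in>M. tv \<A> \<mu> A \<le> c" "c + tv \<A> la (\<Omega> - A) < \<epsilon>"
        using U unfolding unif_singular_def by blast
      have "\<Omega> - (\<Omega> - A) = A" using sub_sp[OF A(1)] by auto
      moreover have "\<Omega> - A \<in> \<A>" using A(1) by blast
      ultimately show "\<exists>A\<in>\<A>. tv \<A> la A + tv \<A> \<mu> (\<Omega> - A) < \<epsilon>"
        using A \<mu> by (intro bexI[of _ "\<Omega> - A"]) force+
    qed
  qed
qed

end
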